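(* Let $\mathcal{P}_1=\{AABB,ABAB\}$ and $\mathcal{P}_2=\{AABB,ABBA\}$. For each $i\in\{1,2\}$ there are constants $0<c<C$ such that a.a.s. $c\,n^{1/2}\le z_{\mathcal{P}_i}(\mathbb{RM}^{(2)}_{n})\le C\,n^{1/2}$.
   Context: An ordered $2$-matching of size $n$ is a set of $n$ pairwise disjoint $2$-element subsets (edges) of the ordered set $[2n]$ covering it; $\mathbb{RM}^{(2)}_n$ is such a matching chosen uniformly at random. Matchings are written as words (each edge gets a letter, each vertex replaced by its edge's letter), and $AABB, ABAB, ABBA$ are the three $2$-patterns (ordered matchings of size 2). Two edges form a pattern if they induce a matching order-isomorphic to it. For a set $\mathcal P$ of patterns, a $\mathcal P$-clique is a matching all of whose pairs of edges form patterns in $\mathcal P$, and $z_{\mathcal P}(M)$ is the largest size of a $\mathcal P$-clique contained in $M$. "A.a.s." means with probability tending to 1 as $n\to\infty$. *)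

theory Defs
  imports "HOL-Probability.Probability"
begin

definition ordered_matching :: "nat \<Rightarrow> nat set set \<Rightarrow> bool" where
  "ordered_matching n M \<longleftrightarrow>
     (\<forall>e\<in>M. card e = 2 \<and> e \<subseteq> {1..2*n}) \<and>
     (\<forall>e\<in>M. \<forall>f\<in>M. e \<noteq> f \<longrightarrow> e \<inter> f = {}) \<and>
     \<Union>M = {1..2*n}"

definition matchings :: "nat \<Rightarrow> nat set set set" where
  "matchings n = {M. ordered_matching n M}"

datatype pattern = AABB | ABAB | ABBA

text \<open>Edge e (the A-edge, with the smaller left endpoint) and edge f (the B-edge)
  induce the given pattern.\<close>
fun induces :: "pattern \<Rightarrow> nat set \<Rightarrow> nat set \<Rightarrow> bool" where
  "induces AABB e f \<longleftrightarrow> Max e < Min f"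
| "induces ABAB e f \<longleftrightarrow> Min e < Min f \<and> Min f < Max e \<and> Max e < Max f"
| "induces ABBA e f \<longleftrightarrow> Min e < Min f \<and> Max f < Max e"

definition forms_pattern_in :: "pattern set \<Rightarrow> nat set \<Rightarrow> nat set \<Rightarrow> bool" where
  "forms_pattern_in P e f \<longleftrightarrow> (\<exists>p\<in>P. induces p e f \<or> induces p f e)"

definition is_clique :: "pattern set \<Rightarrow> nat set set \<Rightarrow> bool" where
  "is_clique P K \<longleftrightarrow> (\<forall>e\<in>K. \<forall>f\<in>K. e \<noteq> f \<longrightarrow> forms_pattern_in P e f)"

definition z :: "pattern set \<Rightarrow> nat set set \<Rightarrow> nat" where
  "z P M = Max {card K | K. K \<subseteq> M \<and> is_clique P K}"

definition RM :: "nat \<Rightarrow> nat set set pmf" where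
  "RM n = pmf_of_set (matchings n)"

end

theory Submission
  imports Defs
begin

lemma card2_E:
  assumes "card e = 2"
  obtains a b where "a < b" "e = {a, b::nat}"
proof -
  obtain x y where "e = {x,y}" "x \<noteq> y" using assms by (auto simp: card_Suc_eq numeral_2_eq_2)
  then show ?thesis using that by (metis insert_commute linorder_neq_iff)
qed

lemma card2_MinMax:
  assumes "card (e::nat set) = 2"
  shows "Min e < Max e" "e = {Min e, Max e}" "Min e \<in> e" "Max e \<in> e"
  using assms by (auto elim!: card2_E)

lemma disj_ends:
  assumes "card (e::nat set) = 2" "card f = 2" "e \<inter> f = {}"
  shows "Min e \<noteq> Min f" "Min e \<noteq> Max f" "Max e \<noteq> Min f" "Max e \<noteq> Max f"
  using assms card2_MinMax[OF assms(1)] card2_MinMax[OF assms(2)] by (metis disjoint_iff)+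

definition pmat :: "nat set set \<Rightarrow> bool" where
  "pmat K \<longleftrightarrow> (\<forall>e\<in>K. card e = 2) \<and> (\<forall>e\<in>K. \<forall>f\<in>K. e \<noteq> f \<longrightarrow> e \<inter> f = {})"

definition pm :: "nat set \<Rightarrow> nat set set set" where
  "pm S = {M. pmat M \<and> \<Union>M = S}"

fun g :: "nat \<Rightarrow> nat" where
  "g 0 = 1" | "g (Suc m) = (2*m+1) * g m"

lemma pm_empty: "pm {} = {{}}"
proof -
  have "M = {}" if "pmat M" "\<Union>M = {}" for M
  proof (rule ccontr)
    assume "M \<noteq> {}" then obtain e where "e \<in> M" by auto
    with that have "card e = 2" "e = {}" by (auto simp: pmat_def)
    then show False by simp
  qed
  then show ?thesis by (auto simp: pm_def pmat_def)
qed

lemma pm_finite: "finite S \<Longrightarrow> finite (pm S)"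
  by (rule finite_subset[of _ "Pow (Pow S)"]) (auto simp: pm_def)

lemma pm_split:
  assumes "x \<in> S"
  shows "pm S = (\<Union>y\<in>S-{x}. insert {x,y} ` pm (S - {x,y}))"
proof
  show "pm S \<subseteq> (\<Union>y\<in>S-{x}. insert {x,y} ` pm (S - {x,y}))"
  proof
    fix M assume M: "M \<in> pm S"
    then obtain e where e: "e \<in> M" "x \<in> e" using assms by (auto simp: pm_def)
    then have "card e = 2" using M by (auto simp: pm_def pmat_def)
    then obtain y where y: "e = {x,y}" "y \<noteq> x" using e(2)
      by (auto simp: card_Suc_eq numeral_2_eq_2) 
    have yS: "y \<in> S" using M e y by (auto simp: pm_def)
    have "M - {e} \<in> pm (S - {x,y})"
    proof -
      have "\<Union>(M - {e}) = S - {x,y}"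
      proof
        show "\<Union>(M - {e}) \<subseteq> S - {x, y}"
        proof
          fix z assume "z \<in> \<Union>(M - {e})"
          then obtain f where f: "f \<in> M" "f \<noteq> e" "z \<in> f" by auto
          then have "f \<inter> e = {}" using M e by (auto simp: pm_def pmat_def)
          then show "z \<in> S - {x,y}" using f M y by (auto simp: pm_def)
        qed
        show "S - {x, y} \<subseteq> \<Union>(M - {e})" using M y by (auto simp: pm_def)
      qed
      then show ?thesis using M by (auto simp: pm_def pmat_def)
    qed
    moreover have "M = insert {x,y} (M - {e})" using e y by auto
    ultimately show "M \<in> (\<Union>y\<in>S-{x}. insert {x,y} ` pm (S - {x,y}))" using yS y by blast
  qed
  show "(\<Union>y\<in>S-{x}. insert {x,y} ` pm (S - {x,y})) \<subseteq> pm S"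
  proof
    fix M assume "M \<in> (\<Union>y\<in>S-{x}. insert {x,y} ` pm (S - {x,y}))"
    then obtain y M' where y: "y \<in> S" "y \<noteq> x" and M': "M' \<in> pm (S - {x,y})" "M = insert {x,y} M'"
      by auto
    have "\<forall>f\<in>M'. f \<inter> {x,y} = {}" using M' by (auto simp: pm_def)
    then show "M \<in> pm S" using M' y assms
      by (auto simp: pm_def pmat_def)
  qed
qed

lemma pm_count: "finite S \<Longrightarrow> card S = 2*m \<Longrightarrow> card (pm S) = g m"
proof (induction m arbitrary: S)
  case 0
  then show ?case by (simp add: pm_empty)
next
  case (Suc m)
  then obtain x where x: "x \<in> S" by fastforce
  have disj: "insert {x,y} ` pm (S - {x,y}) \<inter> insert {x,y'} ` pm (S - {x,y'}) = {}"
    if "y \<in> S-{x}" "y' \<in> S-{x}" "y \<noteq> y'" for y y'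
  proof (rule ccontr)
    assume "\<not> ?thesis"
    then obtain M1 M2 where M: "M1 \<in> pm (S - {x,y})" "M2 \<in> pm (S - {x,y'})" "insert {x,y} M1 = insert {x,y'} M2"
      by blast
    have "{x,y} \<noteq> {x,y'}" using that by (simp add: doubleton_eq_iff)
    then have "{x,y} \<in> M2" using M(3) by blast
    then have "x \<in> \<Union>M2" by blast
    then have "x \<in> S - {x,y'}" using M(2) unfolding pm_def by blast
    then show False by simp
  qed
  have each: "card (insert {x,y} ` pm (S - {x,y})) = g m" if y: "y \<in> S-{x}" for y
  proof -
    have nin: "{x,y} \<notin> A" if "A \<in> pm (S - {x,y})" for A
    proof
      assume "{x,y} \<in> A"
      then have "x \<in> \<Union>A" by blast
      then show False using that unfolding pm_def by blast
    qed
    have "inj_on (insert {x,y}) (pm (S - {x,y}))"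
    proof (rule inj_onI)
      fix A B assume AB: "A \<in> pm (S - {x,y})" "B \<in> pm (S - {x,y})" "insert {x,y} A = insert {x,y} B"
      have "A = insert {x,y} A - {{x,y}}" using nin[OF AB(1)] by simp
      also have "\<dots> = insert {x,y} B - {{x,y}}" using AB(3) by simp
      also have "\<dots> = B" using nin[OF AB(2)] by simp
      finally show "A = B" .
    qed
    then have "card (insert {x,y} ` pm (S - {x,y})) = card (pm (S - {x,y}))" by (rule card_image)
    also have "\<dots> = g m"
    proof (rule Suc.IH)
      show "finite (S - {x, y})" using Suc.prems by simp
      have "card {x,y} = 2" using y by simp
      moreover have "{x,y} \<subseteq> S" using x y by simp
      ultimately show "card (S - {x, y}) = 2 * m" using Suc.prems(1,2)
        by (simp add: card_Diff_subset)
    qed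
    finally show ?thesis .
  qed
  have "card (pm S) = (\<Sum>y\<in>S-{x}. card (insert {x,y} ` pm (S - {x,y})))"
    unfolding pm_split[OF x]
  proof (rule card_UN_disjoint)
    show "finite (S - {x})" using Suc.prems by simp
    show "\<forall>i\<in>S - {x}. finite (insert {x, i} ` pm (S - {x, i}))"
      using Suc.prems by (simp add: pm_finite)
    show "\<forall>i\<in>S - {x}. \<forall>j\<in>S - {x}. i \<noteq> j \<longrightarrow>
        insert {x, i} ` pm (S - {x, i}) \<inter> insert {x, j} ` pm (S - {x, j}) = {}"
      using disj by blast
  qed
  also have "\<dots> = (\<Sum>y\<in>S-{x}. g m)" using each by simp
  also have "\<dots> = (2*m+1) * g m" using Suc.prems x by simp
  finally show ?case by simp
qed

lemma matchings_pm: "matchings n = pm {1..2*n}"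
  unfolding matchings_def pm_def pmat_def ordered_matching_def by auto


abbreviation "P1 \<equiv> {AABB, ABAB}"
abbreviation "P2 \<equiv> {AABB, ABBA}"
abbreviation "PQ \<equiv> {ABBA}"

lemma fp_P1:
  assumes "card e = 2" "card f = 2" "e \<inter> f = {}"
  shows "forms_pattern_in P1 e f \<longleftrightarrow> \<not>(Min e < Min f \<and> Max f < Max e) \<and> \<not>(Min f < Min e \<and> Max e < Max f)"
  using card2_MinMax(1)[OF assms(1)] card2_MinMax(1)[OF assms(2)] disj_ends[OF assms]
  by (auto simp: forms_pattern_in_def)

lemma fp_P2:
  assumes "card e = 2" "card f = 2" "e \<inter> f = {}"
  shows "forms_pattern_in P2 e f \<longleftrightarrow> \<not>(Min e < Min f \<and> Min f < Max e \<and> Max e < Max f) \<and> \<not>(Min f < Min e \<and> Min e < Max f \<and> Max f < Max e)"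
  using card2_MinMax(1)[OF assms(1)] card2_MinMax(1)[OF assms(2)] disj_ends[OF assms]
  by (auto simp: forms_pattern_in_def)

lemma fp_Q:
  assumes "card e = 2" "card f = 2" "e \<inter> f = {}"
  shows "forms_pattern_in PQ e f \<longleftrightarrow> (Min e < Min f \<and> Max f < Max e) \<or> (Min f < Min e \<and> Max e < Max f)"
  using card2_MinMax(1)[OF assms(1)] card2_MinMax(1)[OF assms(2)] disj_ends[OF assms]
  by (auto simp: forms_pattern_in_def)

lemma no_bad:
  fixes \<mu> :: "nat set \<Rightarrow> nat"
  assumes step: "\<And>e e'. e\<in>K \<Longrightarrow> e'\<in>K' \<Longrightarrow> Min e = Min e' \<Longrightarrow> Max e < Max e' \<Longrightarrow>
     \<exists>f\<in>K. \<exists>f'\<in>K'. Min f = Min f' \<and> Max f < Max f' \<and> \<mu> f < \<mu> e"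
  shows "e\<in>K \<Longrightarrow> e'\<in>K' \<Longrightarrow> Min e = Min e' \<Longrightarrow> Max e < Max e' \<Longrightarrow> False"
proof (induction "\<mu> e" arbitrary: e e' rule: less_induct)
  case less
  from step[OF less.prems] obtain f f' where "f\<in>K" "f'\<in>K'" "Min f = Min f'" "Max f < Max f'" "\<mu> f < \<mu> e"
    by blast
  then show False using less.hyps by blast
qed

lemma det_generic:
  assumes "pmat K" "pmat K'" "Min`K = Min`K'"
    and nb1: "\<And>e e'. e\<in>K \<Longrightarrow> e'\<in>K' \<Longrightarrow> Min e = Min e' \<Longrightarrow> \<not> Max e < Max e'"
    and nb2: "\<And>e e'. e\<in>K \<Longrightarrow> e'\<in>K' \<Longrightarrow> Min e = Min e' \<Longrightarrow> \<not> Max e' < Max e"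
  shows "K \<subseteq> K'"
proof
  fix e assume e: "e \<in> K"
  then obtain e' where e': "e' \<in> K'" "Min e = Min e'" using assms(3) by (metis imageE imageI)
  then have "Max e = Max e'" using nb1[OF e e'] nb2[OF e e'] by simp
  moreover have "card e = 2" "card e' = 2" using assms e e' by (auto simp: pmat_def)
  ultimately have "e = e'" using e' card2_MinMax(2) by metis
  then show "e \<in> K'" using e' by simp
qed

locale two_cliques =
  fixes K K' :: "nat set set" and P
  assumes pK: "pmat K" and pK': "pmat K'" and cK: "is_clique P K" and cK': "is_clique P K'"
    and mins: "Min`K' \<subseteq> Min`K" and maxs: "Max`K \<subseteq> Max`K'"
begin

lemma tc_init:
  assumes "e\<in>K" "e'\<in>K'" "Min e = Min e'" "Max e < Max e'"
  obtains f f' where "f\<in>K" "f'\<in>K'" "Max f' = Max e" "Min f = Min f'" "f' \<noteq> e'" "f \<noteq> e"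
    "Min f' < Max f'" "Min f < Max f"
    "card e = 2" "card e' = 2" "card f = 2" "card f' = 2"
    "e \<inter> f = {}" "e' \<inter> f' = {}"
proof -
  obtain f' where f': "f' \<in> K'" "Max f' = Max e" using maxs assms(1) by (metis image_eqI image_subset_iff imageE)
  obtain f where f: "f \<in> K" "Min f = Min f'" using mins f'(1) by (metis image_eqI image_subset_iff imageE)
  have ne1: "f' \<noteq> e'" using f' assms by auto
  have c: "card e = 2" "card e' = 2" "card f = 2" "card f' = 2" using pK pK' assms f f' by (auto simp: pmat_def)
  have ne2: "f \<noteq> e"
  proof
    assume "f = e"
    then have "Min f' = Min e'" using f assms by simp
    moreover have "f' \<inter> e' = {}" using pK' ne1 f' assms by (auto simp: pmat_def)
    ultimately show False using disj_ends(1)[OF c(4) c(2)] by simp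
  qed
  have "e \<inter> f = {}" "e' \<inter> f' = {}" using pK pK' ne1 ne2 f f' assms by (auto simp: pmat_def)
  then show ?thesis using that[OF f(1) f'(1) f'(2) f(2) ne1 ne2 _ _ c] card2_MinMax(1) c by blast
qed

end

lemma step_P1:
  assumes "two_cliques K K' P1" "e\<in>K" "e'\<in>K'" "Min e = Min e'" "Max e < Max e'"
  shows "\<exists>f\<in>K. \<exists>f'\<in>K'. Min f = Min f' \<and> Max f < Max f' \<and> Min f < Min e"
proof -
  interpret two_cliques K K' P1 by fact
  obtain f f' where ff: "f\<in>K" "f'\<in>K'" "Max f' = Max e" "Min f = Min f'" "f' \<noteq> e'" "f \<noteq> e"
    "Min f' < Max f'" "Min f < Max f"
    "card e = 2" "card e' = 2" "card f = 2" "card f' = 2"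
    "e \<inter> f = {}" "e' \<inter> f' = {}" using tc_init[OF assms(2-5)] by blast
  have "forms_pattern_in P1 e' f'" using cK' ff assms by (auto simp: is_clique_def)
  then have A: "\<not>(Min e' < Min f' \<and> Max f' < Max e') \<and> \<not>(Min f' < Min e' \<and> Max e' < Max f')"
    using fp_P1 ff by blast
  have "forms_pattern_in P1 e f" using cK ff assms by (auto simp: is_clique_def)
  then have B: "\<not>(Min e < Min f \<and> Max f < Max e) \<and> \<not>(Min f < Min e \<and> Max e < Max f)"
    using fp_P1 ff by blast
  have d1: "Min e' \<noteq> Min f'" using disj_ends ff by metis
  have d2: "Max e \<noteq> Max f" using disj_ends ff by metis
  have "Min f < Min e" using A d1 ff(3,4,7,8) assms(4,5) card2_MinMax(1)[OF ff(9)] by auto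
  moreover have "Max f < Max f'" using B d2 ff(3,4,7,8) assms(4,5) card2_MinMax(1)[OF ff(9)] calculation by auto
  ultimately show ?thesis using ff by blast
qed

lemma step_PQ:
  assumes "two_cliques K K' PQ" "e\<in>K" "e'\<in>K'" "Min e = Min e'" "Max e < Max e'"
  shows "\<exists>f\<in>K. \<exists>f'\<in>K'. Min f = Min f' \<and> Max f < Max f' \<and> Min f > Min e"
proof -
  interpret two_cliques K K' PQ by fact
  obtain f f' where ff: "f\<in>K" "f'\<in>K'" "Max f' = Max e" "Min f = Min f'" "f' \<noteq> e'" "f \<noteq> e"
    "Min f' < Max f'" "Min f < Max f"
    "card e = 2" "card e' = 2" "card f = 2" "card f' = 2"
    "e \<inter> f = {}" "e' \<inter> f' = {}" using tc_init[OF assms(2-5)] by blast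
  have "forms_pattern_in PQ e' f'" using cK' ff assms by (auto simp: is_clique_def)
  then have A: "(Min e' < Min f' \<and> Max f' < Max e') \<or> (Min f' < Min e' \<and> Max e' < Max f')"
    using fp_Q ff by blast
  have "forms_pattern_in PQ e f" using cK ff assms by (auto simp: is_clique_def)
  then have B: "(Min e < Min f \<and> Max f < Max e) \<or> (Min f < Min e \<and> Max e < Max f)"
    using fp_Q ff by blast
  have "Min f > Min e" using A ff(3,4,7,8) assms(4,5) card2_MinMax(1)[OF ff(9)] by auto
  moreover have "Max f < Max f'" using B ff(3,4,7,8) assms(4,5) card2_MinMax(1)[OF ff(9)] calculation by auto
  ultimately show ?thesis using ff by blast
qed

lemma step_P2:
  assumes "two_cliques K K' P2" "e\<in>K" "e'\<in>K'" "Min e = Min e'" "Max e < Max e'"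
  shows "\<exists>f\<in>K. \<exists>f'\<in>K'. Min f = Min f' \<and> Max f < Max f' \<and> Max f - Min f < Max e - Min e"
proof -
  interpret two_cliques K K' P2 by fact
  obtain f f' where ff: "f\<in>K" "f'\<in>K'" "Max f' = Max e" "Min f = Min f'" "f' \<noteq> e'" "f \<noteq> e"
    "Min f' < Max f'" "Min f < Max f"
    "card e = 2" "card e' = 2" "card f = 2" "card f' = 2"
    "e \<inter> f = {}" "e' \<inter> f' = {}" using tc_init[OF assms(2-5)] by blast
  have "forms_pattern_in P2 e' f'" using cK' ff assms by (auto simp: is_clique_def)
  then have A: "\<not>(Min e' < Min f' \<and> Min f' < Max e' \<and> Max e' < Max f') \<and> \<not>(Min f' < Min e' \<and> Min e' < Max f' \<and> Max f' < Max e')"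
    using fp_P2 ff by blast
  have "forms_pattern_in P2 e f" using cK ff assms by (auto simp: is_clique_def)
  then have B: "\<not>(Min e < Min f \<and> Min f < Max e \<and> Max e < Max f) \<and> \<not>(Min f < Min e \<and> Min e < Max f \<and> Max f < Max e)"
    using fp_P2 ff by blast
  have d1: "Min e' \<noteq> Min f'" using disj_ends ff by metis
  have d2: "Max e \<noteq> Max f" using disj_ends ff by metis
  have "Min f > Min e" using A d1 ff(3,4,7,8) assms(4,5) card2_MinMax(1)[OF ff(9)] by auto
  moreover have "Max f < Max f'" using B d2 ff(3,4,7,8) assms(4,5) card2_MinMax(1)[OF ff(9)] calculation by auto
  moreover have "Max f - Min f < Max e - Min e" using calculation ff by linarith
  ultimately show ?thesis using ff by blast
qed


lemma nb_of:
  assumes "two_cliques X Y P" "P \<in> {P1,P2,PQ}" "\<forall>e\<in>X. Min e \<le> B"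
    "e\<in>X" "e'\<in>Y" "Min e = Min e'"
  shows "\<not> Max e < Max e'"
proof -
  consider "P = P1" | "P = P2" | "P = PQ" using assms(2) by blast
  then show ?thesis
  proof cases
    case 1
    show ?thesis
      using no_bad[of X Y Min, OF _ assms(4-6)] step_P1[of X Y] assms(1) 1 by blast
  next
    case 2
    show ?thesis
      using no_bad[of X Y "\<lambda>e. Max e - Min e", OF _ assms(4-6)] step_P2[of X Y] assms(1) 2 by blast
  next
    case 3
    have "\<exists>f\<in>X. \<exists>f'\<in>Y. Min f = Min f' \<and> Max f < Max f' \<and> B - Min f < B - Min e"
      if h: "e\<in>X" "e'\<in>Y" "Min e = Min e'" "Max e < Max e'" for e e'
    proof -
      obtain f f' where "f\<in>X" "f'\<in>Y" "Min f = Min f'" "Max f < Max f'" "Min f > Min e"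
        using step_PQ[of X Y e e'] assms(1) 3 h by blast
      moreover have "Min f \<le> B" using assms(3) calculation by blast
      ultimately show ?thesis by (intro bexI[of _ f] bexI[of _ f']) auto
    qed
    then show ?thesis
      using no_bad[of X Y "\<lambda>e. B - Min e", OF _ assms(4-6)] by blast
  qed
qed

lemma det:
  assumes "P \<in> {P1,P2,PQ}" "pmat K" "pmat K'" "is_clique P K" "is_clique P K'"
    "Min`K = Min`K'" "Max`K = Max`K'" "\<forall>e\<in>K. Min e \<le> B" "\<forall>e\<in>K'. Min e \<le> B"
  shows "K = K'"
proof -
  have t1: "two_cliques K K' P" using assms by (unfold_locales) auto
  have t2: "two_cliques K' K P" using assms by (unfold_locales) auto
  have "K \<subseteq> K'"
    using det_generic[OF assms(2,3,6)] nb_of[OF t1 assms(1,8)] nb_of[OF t2 assms(1,9)] by metis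
  moreover have "K' \<subseteq> K"
    using det_generic[OF assms(3,2) assms(6)[symmetric]] nb_of[OF t1 assms(1,8)] nb_of[OF t2 assms(1,9)] by metis
  ultimately show ?thesis by blast
qed

lemma clique_sub: "is_clique P K \<Longrightarrow> K' \<subseteq> K \<Longrightarrow> is_clique P K'"
  unfolding is_clique_def by blast

lemma z_set_eq: "{card K | K. K \<subseteq> M \<and> is_clique P K} = card ` {K. K \<subseteq> M \<and> is_clique P K}"
  by blast

lemma z_ge_card: "finite M \<Longrightarrow> K \<subseteq> M \<Longrightarrow> is_clique P K \<Longrightarrow> card K \<le> z P M"
  unfolding z_def z_set_eq by (rule Max_ge) auto

lemma z_attained: "finite M \<Longrightarrow> \<exists>K\<subseteq>M. is_clique P K \<and> card K = z P M"
proof -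
  assume "finite M"
  moreover have "is_clique P {}" by (simp add: is_clique_def)
  ultimately have "z P M \<in> card ` {K. K \<subseteq> M \<and> is_clique P K}"
    unfolding z_def z_set_eq by (intro Max_in) auto
  then show ?thesis by auto
qed

lemma z_ge_sub: "finite M \<Longrightarrow> k \<le> z P M \<Longrightarrow> \<exists>K\<subseteq>M. is_clique P K \<and> card K = k"
proof -
  assume a: "finite M" "k \<le> z P M"
  then obtain K where K: "K \<subseteq> M" "is_clique P K" "card K = z P M" using z_attained by blast
  then obtain K' where "K' \<subseteq> K" "card K' = k" using a by (metis obtain_subset_with_card_n)
  then show ?thesis using K clique_sub by blast
qed

lemma z_mono: "P \<subseteq> P' \<Longrightarrow> finite M \<Longrightarrow> z P M \<le> z P' M"
proof -
  assume a: "P \<subseteq> P'" "finite M"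
  then obtain K where K: "K \<subseteq> M" "is_clique P K" "card K = z P M" using z_attained by blast
  then have "is_clique P' K" using a unfolding is_clique_def forms_pattern_in_def by blast
  then show ?thesis using z_ge_card[OF a(2) K(1)] K by simp
qed


definition lt :: "nat set \<Rightarrow> nat set \<Rightarrow> bool" where
  "lt e f \<longleftrightarrow> Min e < Min f \<and> Max e < Max f"

lemma lt_P1:
  assumes "card e = 2" "card f = 2" "e \<inter> f = {}" "lt e f"
  shows "forms_pattern_in P1 e f" "forms_pattern_in P1 f e"
proof -
  have a: "Min e < Min f" "Max e < Max f" using assms(4) unfolding lt_def by auto
  have "f \<inter> e = {}" using assms(3) by blast
  note F = fp_P1[OF assms(1-3)] fp_P1[OF assms(2,1) this]
  show "forms_pattern_in P1 e f" unfolding F(1) using a by simp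
  show "forms_pattern_in P1 f e" unfolding F(2) using a by simp
qed

lemma nlt_PQ:
  assumes "card e = 2" "card f = 2" "e \<inter> f = {}" "\<not> lt e f" "\<not> lt f e"
  shows "forms_pattern_in PQ e f"
proof -
  have d: "Min e \<noteq> Min f" "Max e \<noteq> Max f" using disj_ends[OF assms(1-3)] by blast+
  have l: "\<not> (Min e < Min f \<and> Max e < Max f)" "\<not> (Min f < Min e \<and> Max f < Max e)"
    using assms(4,5) unfolding lt_def by blast+
  have "(Min e < Min f \<and> Max f < Max e) \<or> (Min f < Min e \<and> Max e < Max f)"
  proof (cases "Min e < Min f")
    case True
    then have "Max f < Max e" using l(1) d(2) by simp
    then show ?thesis using True by blast
  next
    case False
    then have "Min f < Min e" using d(1) by simp
    moreover have "Max e < Max f" using l(2) d(2) calculation by simp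
    ultimately show ?thesis by blast
  qed
  then show ?thesis unfolding fp_Q[OF assms(1-3)] .
qed

lemma mirsky:
  assumes pm: "pmat M" and fin: "finite M"
  shows "card M \<le> z P1 M * z PQ M"
proof -
  define H where "H e = {C. C \<subseteq> M \<and> is_clique P1 C \<and> e \<in> C \<and> (\<forall>c\<in>C. c = e \<or> lt c e)}" for e
  define h where "h e = Max (card ` H e)" for e
  have Hfin: "finite (card ` H e)" for e
  proof -
    have "H e \<subseteq> Pow M" unfolding H_def by blast
    then have "finite (H e)" using fin by (meson finite_Pow_iff finite_subset)
    then show ?thesis by blast
  qed
  have Hne: "{e} \<in> H e" if "e \<in> M" for e
    using that unfolding H_def is_clique_def by blast
  have h_att: "\<exists>C\<in>H e. card C = h e" if "e \<in> M" for e
  proof -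
    have "card ` H e \<noteq> {}" using Hne[OF that] by blast
    then have "h e \<in> card ` H e" unfolding h_def using Hfin by (intro Max_in) 
    then show ?thesis by (metis imageE)
  qed
  have h_ge: "card C \<le> h e" if "C \<in> H e" for C e
    unfolding h_def by (rule Max_ge[OF Hfin]) (use that in blast)
  have h1: "1 \<le> h e" if "e \<in> M" for e using h_ge[OF Hne[OF that]] by simp
  have hb: "h e \<le> z P1 M" if eM: "e \<in> M" for e
  proof -
    obtain C where "C \<in> H e" "card C = h e" using h_att[OF eM] by blast
    then show ?thesis using z_ge_card[OF fin, of C P1] unfolding H_def by simp
  qed
  have c2: "card e = 2" if "e \<in> M" for e using pm that unfolding pmat_def by blast
  have dj: "e \<inter> f = {}" if "e \<in> M" "f \<in> M" "e \<noteq> f" for e f using pm that unfolding pmat_def by blast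
  have h2: "h e < h f" if ef: "e \<in> M" "f \<in> M" "lt e f" for e f
  proof -
    obtain C where C: "C \<in> H e" "card C = h e" using h_att[OF ef(1)] by blast
    have CM: "C \<subseteq> M" and Ccl: "is_clique P1 C" and Ce: "\<forall>c\<in>C. c = e \<or> lt c e"
      using C(1) unfolding H_def by blast+
    have ltcf: "lt c f" if cC: "c \<in> C" for c
    proof -
      have "c = e \<or> lt c e" using Ce cC by blast
      then show ?thesis using ef(3) unfolding lt_def by auto
    qed
    have fC: "f \<notin> C"
    proof
      assume "f \<in> C"
      then have "lt f f" by (rule ltcf)
      then show False unfolding lt_def by simp
    qed
    have fp: "forms_pattern_in P1 c f" "forms_pattern_in P1 f c" if cC: "c \<in> C" for c
    proof -
      have cM: "c \<in> M" "c \<noteq> f" using CM cC fC by auto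
      show "forms_pattern_in P1 c f" "forms_pattern_in P1 f c"
        using lt_P1[OF c2[OF cM(1)] c2[OF ef(2)] dj[OF cM(1) ef(2) cM(2)] ltcf[OF cC]] by auto
    qed
    have "is_clique P1 (insert f C)"
      unfolding is_clique_def
    proof (intro ballI impI)
      fix x y assume "x \<in> insert f C" "y \<in> insert f C" "x \<noteq> y"
      then consider "x = f" "y \<in> C" | "y = f" "x \<in> C" | "x \<in> C" "y \<in> C" by blast
      then show "forms_pattern_in P1 x y"
      proof cases
        case 1 then show ?thesis using fp by blast
      next
        case 2 then show ?thesis using fp by blast
      next
        case 3 then show ?thesis using Ccl \<open>x \<noteq> y\<close> unfolding is_clique_def by blast
      qed
    qed
    moreover have "\<forall>c\<in>insert f C. c = f \<or> lt c f" using ltcf by blast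
    ultimately have "insert f C \<in> H f" using CM ef(2) unfolding H_def by blast
    then have "card (insert f C) \<le> h f" by (rule h_ge)
    moreover have "finite C" using CM fin by (rule finite_subset)
    ultimately show ?thesis using C(2) fC by simp
  qed
  define F where "F j = {e\<in>M. h e = j}" for j
  have Fq: "is_clique PQ (F j)" for j
    unfolding is_clique_def
  proof (intro ballI impI)
    fix e f assume a: "e \<in> F j" "f \<in> F j" "e \<noteq> f"
    then have m: "e \<in> M" "f \<in> M" "h e = h f" unfolding F_def by auto
    have n1: "\<not> lt e f"
    proof
      assume "lt e f"
      then have "h e < h f" using h2 m(1,2) by blast
      then show False using m(3) by simp
    qed
    have n2: "\<not> lt f e"
    proof
      assume "lt f e"
      then have "h f < h e" using h2 m(1,2) by blast
      then show False using m(3) by simp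
    qed
    from n1 n2 show "forms_pattern_in PQ e f"
      using nlt_PQ[OF c2[OF m(1)] c2[OF m(2)] dj[OF m(1,2) a(3)]] by blast
  qed
  have Fc: "card (F j) \<le> z PQ M" for j
  proof -
    have "F j \<subseteq> M" unfolding F_def by blast
    then show ?thesis using z_ge_card[OF fin _ Fq] by blast
  qed
  have "M \<subseteq> (\<Union>j\<in>{1..z P1 M}. F j)"
  proof
    fix e assume "e \<in> M"
    then have "h e \<in> {1..z P1 M}" "e \<in> F (h e)" using h1 hb unfolding F_def by auto
    then show "e \<in> (\<Union>j\<in>{1..z P1 M}. F j)" by blast
  qed
  then have "card M \<le> card (\<Union>j\<in>{1..z P1 M}. F j)"
    by (rule card_mono[rotated]) (rule finite_subset[OF _ fin], unfold F_def, blast)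
  also have "\<dots> \<le> (\<Sum>j\<in>{1..z P1 M}. card (F j))" by (rule card_UN_le) simp
  also have "\<dots> \<le> (\<Sum>j\<in>{1..z P1 M}. z PQ M)" by (intro sum_mono Fc)
  finally show ?thesis by simp
qed


definition Q :: "pattern set \<Rightarrow> nat \<Rightarrow> nat \<Rightarrow> nat set set set" where
  "Q P n k = {K. pmat K \<and> K \<subseteq> Pow {1..2*n} \<and> is_clique P K \<and> card K = k}"

lemma min_inj: "pmat K \<Longrightarrow> inj_on Min K"
proof (rule inj_onI)
  fix e f assume a: "pmat K" "e \<in> K" "f \<in> K" "Min e = Min f"
  show "e = f"
  proof (rule ccontr)
    assume "e \<noteq> f"
    then have "e \<inter> f = {}" "card e = 2" "card f = 2" using a unfolding pmat_def by blast+
    then show False using disj_ends(1) a(4) by blast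
  qed
qed

lemma max_inj: "pmat K \<Longrightarrow> inj_on Max K"
proof (rule inj_onI)
  fix e f assume a: "pmat K" "e \<in> K" "f \<in> K" "Max e = Max f"
  show "e = f"
  proof (rule ccontr)
    assume "e \<noteq> f"
    then have "e \<inter> f = {}" "card e = 2" "card f = 2" using a unfolding pmat_def by blast+
    then show False using disj_ends(4) a(4) by blast
  qed
qed

lemma Q_D:
  assumes "K \<in> Q P n k"
  shows "pmat K" "K \<subseteq> Pow {1..2*n}" "is_clique P K" "card K = k"
  using assms by (simp_all add: Q_def)

lemma pmat_card: "pmat K \<Longrightarrow> e \<in> K \<Longrightarrow> card e = 2"
  by (simp add: pmat_def)

lemma Pow_mem: "K \<subseteq> Pow S \<Longrightarrow> e \<in> K \<Longrightarrow> e \<subseteq> S"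
  by (drule subsetD) simp_all

lemma Q_finite: "finite (Q P n k)"
  by (rule finite_subset[of _ "Pow (Pow {1..2*n})"]) (auto simp: Q_def)

lemma Q_card:
  assumes P: "P \<in> {P1,P2,PQ}"
  shows "card (Q P n k) \<le> (2*n choose k)^2"
proof -
  define A where "A = {X. X \<subseteq> {1..2*n} \<and> card X = k}"
  have bnd: "\<forall>e\<in>K. Min e \<le> 2*n" if "K \<in> Q P n k" for K
  proof
    fix e assume e: "e \<in> K"
    have "card e = 2" "e \<subseteq> {1..2*n}" using pmat_card[OF Q_D(1)[OF that] e] Pow_mem[OF Q_D(2)[OF that] e] by simp_all
    then have "Min e \<in> {1..2*n}" using card2_MinMax(3) by (meson subsetD)
    then show "Min e \<le> 2*n" by simp
  qed
  have inj: "inj_on (\<lambda>K. (Min`K, Max`K)) (Q P n k)"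
  proof (rule inj_onI)
    fix K K' assume KK: "K \<in> Q P n k" "K' \<in> Q P n k" "(Min`K, Max`K) = (Min`K', Max`K')"
    show "K = K'"
    proof (rule det[OF P _ _ _ _ _ _ bnd[OF KK(1)] bnd[OF KK(2)]])
      show "pmat K" "pmat K'" "is_clique P K" "is_clique P K'" using Q_D(1,3)[OF KK(1)] Q_D(1,3)[OF KK(2)] by simp_all
      show "Min`K = Min`K'" "Max`K = Max`K'" using KK(3) by simp_all
    qed
  qed
  have sub: "(\<lambda>K. (Min`K, Max`K)) ` Q P n k \<subseteq> A \<times> A"
  proof
    fix x assume "x \<in> (\<lambda>K. (Min`K, Max`K)) ` Q P n k"
    then obtain K where K: "K \<in> Q P n k" "x = (Min`K, Max`K)" by blast
    note pK = Q_D(1,4,2)[OF K(1)]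
    have "card (Min`K) = k" "card (Max`K) = k"
      using card_image[OF min_inj[OF pK(1)]] card_image[OF max_inj[OF pK(1)]] pK(2) by simp_all
    moreover have "Min`K \<subseteq> {1..2*n}" "Max`K \<subseteq> {1..2*n}"
    proof -
      have "Min e \<in> {1..2*n}" "Max e \<in> {1..2*n}" if "e \<in> K" for e
      proof -
        have "card e = 2" "e \<subseteq> {1..2*n}" using pmat_card[OF pK(1) that] Pow_mem[OF pK(3) that] by simp_all
        then show "Min e \<in> {1..2*n}" "Max e \<in> {1..2*n}" using card2_MinMax(3,4) by blast+
      qed
      then show "Min`K \<subseteq> {1..2*n}" "Max`K \<subseteq> {1..2*n}" by blast+
    qed
    ultimately show "x \<in> A \<times> A" unfolding A_def K(2) by simp
  qed
  have finA: "finite A" unfolding A_def by (rule finite_subset[of _ "Pow {1..2*n}"]) auto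
  have "card (Q P n k) = card ((\<lambda>K. (Min`K, Max`K)) ` Q P n k)" using card_image[OF inj] by simp
  also have "\<dots> \<le> card (A \<times> A)" by (rule card_mono[OF _ sub]) (simp add: finA)
  also have "\<dots> = (2*n choose k)^2" unfolding card_cartesian_product A_def
    by (simp add: n_subsets power2_eq_square)
  finally show ?thesis .
qed

lemma matchings_fin: "M \<in> matchings n \<Longrightarrow> finite M"
  unfolding matchings_pm pm_def by (rule finite_subset[of _ "Pow {1..2*n}"]) auto

lemma contain_card:
  assumes K: "K \<in> Q P n k" and kn: "k \<le> n"
  shows "card {M \<in> matchings n. K \<subseteq> M} \<le> g (n-k)"
proof -
  note pK = Q_D(1,2,4)[OF K]
  define T where "T = {1..2*n} - \<Union>K"
  have finK: "finite K" using pK(2) by (rule finite_subset) simp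
  have "card (\<Union>K) = sum card K"
  proof (rule card_Union_disjoint)
    show "pairwise disjnt K" using pK(1) unfolding pmat_def pairwise_def disjnt_def by blast
    show "finite A" if "A \<in> K" for A using that pK(2) by (meson PowD finite_atLeastAtMost finite_subset subsetD)
  qed
  also have "\<dots> = sum (\<lambda>_. 2) K" by (rule sum.cong) (simp_all add: pmat_card[OF pK(1)])
  also have "\<dots> = 2 * k" using pK(3) by simp
  finally have cU: "card (\<Union>K) = 2*k" .
  have U: "\<Union>K \<subseteq> {1..2*n}" using pK(2) by blast
  have "card T = card {1..2*n} - card (\<Union>K)" unfolding T_def
    by (rule card_Diff_subset[OF finite_subset[OF U] U]) simp
  then have cT: "card T = 2*(n-k)" using cU by simp
  have inj: "inj_on (\<lambda>M. M - K) {M \<in> matchings n. K \<subseteq> M}"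
  proof (rule inj_onI)
    fix M M' assume a: "M \<in> {M \<in> matchings n. K \<subseteq> M}" "M' \<in> {M \<in> matchings n. K \<subseteq> M}" "M - K = M' - K"
    have s1: "K \<subseteq> M" "K \<subseteq> M'" using a(1,2) by simp_all
    have "M = (M - K) \<union> K" using s1(1) by auto
    also have "\<dots> = (M' - K) \<union> K" using a(3) by simp
    also have "\<dots> = M'" using s1(2) by auto
    finally show "M = M'" .
  qed
  have sub: "(\<lambda>M. M - K) ` {M \<in> matchings n. K \<subseteq> M} \<subseteq> pm T"
  proof
    fix X assume "X \<in> (\<lambda>M. M - K) ` {M \<in> matchings n. K \<subseteq> M}"
    then obtain M where M: "M \<in> matchings n" "K \<subseteq> M" "X = M - K" by blast
    have pM0: "pmat M \<and> \<Union>M = {1..2*n}" using M(1) unfolding matchings_pm pm_def by simp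
    note pM = conjunct1[OF pM0] conjunct2[OF pM0]
    have "pmat X" using pM(1) M(3) unfolding pmat_def by blast
    moreover have "\<Union>X = T"
    proof
      show "\<Union>X \<subseteq> T"
      proof
        fix x assume "x \<in> \<Union>X"
        then obtain e where e: "e \<in> M" "e \<notin> K" "x \<in> e" using M(3) by blast
        have "x \<notin> f" if "f \<in> K" for f
        proof -
          have "e \<noteq> f" using e that by blast
          then have "e \<inter> f = {}" using pM(1) e(1) M(2) that unfolding pmat_def by blast
          then show ?thesis using e(3) by blast
        qed
        moreover have "x \<in> \<Union>M" using e(1,3) by (rule UnionI)
        then have "x \<in> {1..2*n}" by (simp only: pM(2))
        ultimately show "x \<in> T" unfolding T_def by blast
      qed
      show "T \<subseteq> \<Union>X"
      proof
        fix y assume y: "y \<in> T"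
        then have "y \<in> \<Union>M" unfolding T_def by (simp only: pM(2) Diff_iff)
        then obtain e where e: "e \<in> M" "y \<in> e" by (rule UnionE)
        have "e \<notin> K" using y e(2) unfolding T_def by blast
        then have "e \<in> X" using e(1) M(3) by simp
        then show "y \<in> \<Union>X" using e(2) by (rule UnionI)
      qed
    qed
    ultimately show "X \<in> pm T" unfolding pm_def by simp
  qed
  have "card {M \<in> matchings n. K \<subseteq> M} = card ((\<lambda>M. M - K) ` {M \<in> matchings n. K \<subseteq> M})"
    using card_image[OF inj] by simp
  also have "\<dots> \<le> card (pm T)" by (rule card_mono[OF pm_finite sub]) (simp add: T_def)
  also have "\<dots> = g (n-k)" by (rule pm_count[OF _ cT]) (simp add: T_def)
  finally show ?thesis .
qed

lemma pmat_subset: "pmat M \<Longrightarrow> K \<subseteq> M \<Longrightarrow> pmat K"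
  unfolding pmat_def by (meson subsetD)

lemma Union_Pow: "\<Union>M = S \<Longrightarrow> K \<subseteq> M \<Longrightarrow> K \<subseteq> Pow S"
proof
  fix e assume a: "\<Union>M = S" "K \<subseteq> M" "e \<in> K"
  then have "e \<subseteq> \<Union>M" by (meson Union_upper subsetD)
  then show "e \<in> Pow S" using a(1) by simp
qed

lemma event_card:
  assumes P: "P \<in> {P1,P2,PQ}" and kn: "k \<le> n"
  shows "card {M \<in> matchings n. k \<le> z P M} \<le> (2*n choose k)^2 * g (n-k)"
proof -
  have sub: "{M \<in> matchings n. k \<le> z P M} \<subseteq> (\<Union>K\<in>Q P n k. {M \<in> matchings n. K \<subseteq> M})"
  proof
    fix M assume M: "M \<in> {M \<in> matchings n. k \<le> z P M}"
    then have Mm: "M \<in> matchings n" "k \<le> z P M" by simp_all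
    obtain K where K: "K \<subseteq> M" "is_clique P K" "card K = k" using z_ge_sub[OF matchings_fin[OF Mm(1)] Mm(2)] by blast
    have pM0: "pmat M \<and> \<Union>M = {1..2*n}" using Mm(1) unfolding matchings_pm pm_def by simp
    note pM = conjunct1[OF pM0] conjunct2[OF pM0]
    have "pmat K" using pM(1) K(1) by (rule pmat_subset)
    moreover have "K \<subseteq> Pow {1..2*n}" using pM(2) K(1) by (rule Union_Pow)
    ultimately have KQ: "K \<in> Q P n k" unfolding Q_def using K(2,3) by (intro CollectI conjI)
    have "M \<in> {M \<in> matchings n. K \<subseteq> M}" using K(1) Mm(1) by (intro CollectI conjI)
    then show "M \<in> (\<Union>K\<in>Q P n k. {M \<in> matchings n. K \<subseteq> M})" by (rule UN_I[OF KQ])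
  qed
  have finm: "finite (matchings n)" unfolding matchings_pm by (rule pm_finite) simp
  have "card {M \<in> matchings n. k \<le> z P M} \<le> card (\<Union>K\<in>Q P n k. {M \<in> matchings n. K \<subseteq> M})"
    by (rule card_mono[OF _ sub]) (rule finite_subset[OF _ finm], blast)
  also have "\<dots> \<le> (\<Sum>K\<in>Q P n k. card {M \<in> matchings n. K \<subseteq> M})"
    by (rule card_UN_le[OF Q_finite])
  also have "\<dots> \<le> (\<Sum>K\<in>Q P n k. g (n-k))"
    by (rule sum_mono) (rule contain_card[OF _ kn])
  also have "\<dots> = card (Q P n k) * g (n-k)" by simp
  also have "\<dots> \<le> (2*n choose k)^2 * g (n-k)" by (rule mult_right_mono[OF Q_card[OF P]]) simp
  finally show ?thesis .
qed

lemma g_pos: "0 < g m" by (induction m) auto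

lemma g_bound: "(2*m+1)^k * g m \<le> g (m + k)"
proof (induction k)
  case 0 then show ?case by simp
next
  case (Suc k)
  have "(2*m+1)^Suc k * g m = (2*m+1) * ((2*m+1)^k * g m)" by (simp only: power_Suc mult.assoc)
  also have "\<dots> \<le> (2*(m+k)+1) * g (m+k)"
  proof (rule mult_mono)
    show "2*m+1 \<le> 2*(m+k)+1" by simp
    show "(2*m+1)^k * g m \<le> g (m+k)" by (rule Suc.IH)
  qed simp_all
  also have "\<dots> = g (m + Suc k)" by simp
  finally show ?case .
qed

lemma card_matchings: "card (matchings n) = g n"
  unfolding matchings_pm by (rule pm_count[where m=n]) auto

lemma prob_bound:
  assumes P: "P \<in> {P1,P2,PQ}" and kn: "k \<le> n" and n2: "n \<le> 2*(n-k)+1"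
  shows "real (card {M \<in> matchings n. k \<le> z P M}) \<le> real ((2*n choose k)^2) / real n ^ k * real (card (matchings n))"
proof (cases "n = 0")
  case True
  then have "k = 0" using kn by simp
  then show ?thesis using True card_matchings[of 0] event_card[OF P, of 0 0] by simp
next
  case False
  have "n^k * g (n-k) \<le> (2*(n-k)+1)^k * g (n-k)" by (intro mult_right_mono power_mono n2) auto
  also have "\<dots> \<le> g n" using g_bound[of "n-k" k] kn by simp
  finally have gn0: "n^k * g (n-k) \<le> g n" .
  have gn: "real n ^ k * real (g (n-k)) \<le> real (g n)" using of_nat_mono[OF gn0, where 'a=real] by simp
  have "real (card {M \<in> matchings n. k \<le> z P M}) \<le> real ((2*n choose k)^2) * real (g (n-k))"
    using of_nat_mono[OF event_card[OF P kn], where 'a=real] by simp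
  also have "\<dots> \<le> real ((2*n choose k)^2) / real n ^ k * real (g n)"
  proof -
    have np: "real n ^ k > 0" using False by simp
    have "real ((2*n choose k)^2) * real (g (n-k)) = real ((2*n choose k)^2) / real n ^ k * (real n ^ k * real (g (n-k)))"
      using np by simp
    also have "\<dots> \<le> real ((2*n choose k)^2) / real n ^ k * real (g n)"
      by (rule mult_left_mono[OF gn]) simp
    finally show ?thesis .
  qed
  finally show ?thesis by (simp add: card_matchings)
qed


lemma choose_fact_le:
  assumes "k \<le> m"
  shows "(m choose k) * fact k \<le> (m::nat) ^ k"
proof -
  have e: "fact k * fact (m - k) * (m choose k) = (fact m :: nat)" by (rule binomial_fact_lemma[OF assms])
  have "fact m div fact (m - k) = (m choose k) * (fact k :: nat)"
  proof -
    have "fact m = ((m choose k) * fact k) * (fact (m - k) :: nat)" using e by (simp add: ac_simps)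
    then show ?thesis by simp
  qed
  then show ?thesis using fact_div_fact_le_pow[OF assms] by simp
qed

lemma one_plus_pow_le: "(1 + 1 / real k) ^ k \<le> exp 1"
proof (cases "k = 0")
  case True then show ?thesis by simp
next
  case False
  have "(1 + 1 / real k) ^ k \<le> exp (1 / real k) ^ k"
    by (rule power_mono) (auto intro: exp_ge_add_one_self_aux)
  also have "\<dots> = exp (real k * (1 / real k))" by (rule exp_of_nat_mult[symmetric])
  also have "\<dots> = exp 1" using False by simp
  finally show ?thesis .
qed

lemma succ_pow_le: "real (Suc k) ^ k \<le> exp 1 * real k ^ k"
proof (cases "k = 0")
  case True then show ?thesis by simp
next
  case False
  have "real (Suc k) = real k * (1 + 1 / real k)" using False by (simp add: field_simps)
  then have "real (Suc k) ^ k = real k ^ k * (1 + 1 / real k) ^ k" by (simp add: power_mult_distrib)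
  also have "\<dots> \<le> real k ^ k * exp 1" by (rule mult_left_mono[OF one_plus_pow_le]) simp
  finally show ?thesis by (simp add: mult.commute)
qed

lemma fact_lb: "real k ^ k \<le> fact k * exp (real k)"
proof (induction k)
  case 0 then show ?case by simp
next
  case (Suc k)
  have "real (Suc k) ^ Suc k = real (Suc k) * real (Suc k) ^ k" by simp
  also have "\<dots> \<le> real (Suc k) * (exp 1 * real k ^ k)"
    by (rule mult_left_mono[OF succ_pow_le]) simp
  also have "\<dots> \<le> real (Suc k) * (exp 1 * (fact k * exp (real k)))"
    by (intro mult_left_mono Suc.IH) auto
  also have "\<dots> = fact (Suc k) * exp (real (Suc k))"
    by (simp add: exp_add[symmetric] algebra_simps)
  finally show ?case .
qed

lemma main_est:
  assumes n: "1 \<le> n" and k: "1 \<le> k" "k \<le> 2*n"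
  shows "real ((2*n choose k)^2) / real n ^ k \<le> (4 * exp 2 * real n / real k ^ 2) ^ k"
proof -
  have c: "real (2*n choose k) * fact k \<le> (2 * real n) ^ k"
    using of_nat_mono[OF choose_fact_le[OF k(2)], where 'a=real] by simp
  have fpos: "(0::real) < fact k" by simp
  have c2: "real (2*n choose k) \<le> (2 * real n) ^ k / fact k" using c fpos by (simp add: field_simps)
  have kk: "real k ^ k / exp (real k) \<le> fact k" using fact_lb[of k] by (simp add: field_simps)
  have kpos: "0 < real k ^ k / exp (real k)" using k by simp
  have npos: "0 < real n ^ k" using n by simp
  have "real ((2*n choose k)^2) = real (2*n choose k) ^ 2" by simp
  also have "\<dots> \<le> ((2 * real n) ^ k / fact k) ^ 2" by (rule power_mono[OF c2]) simp
  also have "\<dots> \<le> ((2 * real n) ^ k / (real k ^ k / exp (real k))) ^ 2"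
  proof (rule power_mono)
    have pp: "0 < fact k * (real k ^ k / exp (real k))" using fpos kpos by (rule mult_pos_pos)
    show "(2 * real n) ^ k / fact k \<le> (2 * real n) ^ k / (real k ^ k / exp (real k))"
      by (rule divide_left_mono[OF kk _ pp]) simp
    show "0 \<le> (2 * real n) ^ k / fact k" by simp
  qed
  finally have A: "real ((2*n choose k)^2) / real n ^ k \<le> ((2 * real n) ^ k / (real k ^ k / exp (real k))) ^ 2 / real n ^ k"
    using npos by (simp add: divide_right_mono)
  also have "\<dots> = (4 * exp 2 * real n / real k ^ 2) ^ k"
  proof -
    have ek: "exp (real k) = exp 1 ^ k" using exp_of_nat_mult[of k 1] by simp
    have e2: "exp (2::real) = exp 1 ^ 2" using exp_of_nat_mult[of 2 1] by simp
    have h1: "real n ^ (k*2) = real n ^ k * real n ^ k" by (simp add: power_mult power2_eq_square)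
    have h2: "(2::real)^(k*2) = 4^k"
      by (simp add: power_mult power2_eq_square power_mult_distrib[symmetric])
    show ?thesis using n k h1 h2 unfolding ek e2
      by (simp add: field_simps power_mult_distrib power_divide flip: power_mult)
  qed
  finally show ?thesis .
qed


lemma card_M:
  assumes "M \<in> matchings n"
  shows "card M = n"
proof -
  have pM0: "pmat M \<and> \<Union>M = {1..2*n}" using assms unfolding matchings_pm pm_def by simp
  note pM = conjunct1[OF pM0] conjunct2[OF pM0]
  have finM: "finite M" by (rule matchings_fin[OF assms])
  have "card (\<Union>M) = sum card M"
  proof (rule card_Union_disjoint)
    show "pairwise disjnt M" using pM(1) unfolding pmat_def pairwise_def disjnt_def by blast
    show "finite A" if "A \<in> M" for A using pmat_card[OF pM(1) that] by (simp add: card_ge_0_finite)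
  qed
  also have "\<dots> = sum (\<lambda>_. 2) M" by (rule sum.cong) (simp_all add: pmat_card[OF pM(1)])
  also have "\<dots> = 2 * card M" by simp
  finally have "2 * card M = 2 * n" using pM(2) by simp
  then show ?thesis by simp
qed

definition kk :: "nat \<Rightarrow> nat" where "kk n = nat \<lceil>8 * sqrt (real n)\<rceil>"

lemma kk_ge: "8 * sqrt (real n) \<le> real (kk n)"
proof -
  have "8 * sqrt (real n) \<le> real_of_int \<lceil>8 * sqrt (real n)\<rceil>" by (rule le_of_int_ceiling)
  also have "\<dots> = real (kk n)" unfolding kk_def by (simp add: of_nat_nat)
  finally show ?thesis .
qed

lemma kk_le: "real (kk n) \<le> 8 * sqrt (real n) + 1"
proof -
  have "real (kk n) = real_of_int \<lceil>8 * sqrt (real n)\<rceil>" unfolding kk_def by (simp add: of_nat_nat)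
  also have "\<dots> \<le> 8 * sqrt (real n) + 1" by (rule of_int_ceiling_le_add_one)
  finally show ?thesis .
qed

lemma kk_less: "j < kk n \<Longrightarrow> real j < 8 * sqrt (real n)"
proof -
  assume "j < kk n"
  then have "int j < \<lceil>8 * sqrt (real n)\<rceil>" unfolding kk_def by linarith
  then have "real_of_int (int j) < 8 * sqrt (real n)" by (simp only: less_ceiling_iff)
  then show ?thesis by simp
qed

lemma kk_props:
  assumes "400 \<le> n"
  shows "1 \<le> kk n" "2 * kk n \<le> n + 1" "64 * real n \<le> real (kk n) ^ 2"
proof -
  define s where "s = sqrt (real n)"
  have s2: "s * s = real n" unfolding s_def by simp
  have "sqrt ((20::real)^2) \<le> s" unfolding s_def by (rule real_sqrt_le_mono) (use assms in simp)
  then have s20: "20 \<le> s" by simp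
  have a: "8 * s \<le> real (kk n)" unfolding s_def by (rule kk_ge)
  have b: "real (kk n) \<le> 8 * s + 1" unfolding s_def by (rule kk_le)
  show "1 \<le> kk n" using a s20 by simp
  have "20 * s \<le> s * s" using s20 by (intro mult_right_mono) auto
  then have "real (2 * kk n) \<le> real (n + 1)" using b s20 s2 by simp
  then show "2 * kk n \<le> n + 1" by (simp only: of_nat_le_iff)
  have "64 * real n = (8 * s) ^ 2" using s2 by (simp add: power2_eq_square)
  also have "\<dots> \<le> real (kk n) ^ 2" by (rule power_mono[OF a]) (use s20 in simp)
  finally show "64 * real n \<le> real (kk n) ^ 2" .
qed


lemma small:
  assumes P: "P \<in> {P1,P2,PQ}" and n: "400 \<le> n"
  shows "real (card {M \<in> matchings n. kk n \<le> z P M}) \<le> (9/16)^(kk n) * real (card (matchings n))"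
proof -
  define k where "k = kk n"
  note kp = kk_props[OF n, folded k_def]
  have kn: "k \<le> n" using kp(1,2) by linarith
  have n2: "n \<le> 2*(n-k)+1" using kp(1,2) by linarith
  have k2: "k \<le> 2*n" using kn by linarith
  have n1: "1 \<le> n" using n by linarith
  have e2: "exp (2::real) \<le> 9"
  proof -
    have "exp (2::real) = exp 1 ^ 2" using exp_of_nat_mult[of 2 "1::real"] by simp
    also have "\<dots> \<le> 3 ^ 2" by (rule power_mono[OF exp_le]) simp
    finally show ?thesis by simp
  qed
  have npos: "0 < real n" using n by simp
  have base: "4 * exp 2 * real n / real k ^ 2 \<le> 9/16"
  proof -
    have kpos: "0 < real k ^ 2" using kp(1) by simp
    have "exp 2 * real n \<le> 9 * real n" by (rule mult_right_mono[OF e2]) (use npos in simp)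
    then have "4 * exp 2 * real n \<le> 9/16 * real k ^ 2" using kp(3) by simp
    then show ?thesis using kpos by (simp add: divide_le_eq)
  qed
  have "real (card {M \<in> matchings n. k \<le> z P M}) \<le> real ((2*n choose k)^2) / real n ^ k * real (card (matchings n))"
    by (rule prob_bound[OF P kn n2])
  also have "\<dots> \<le> (4 * exp 2 * real n / real k ^ 2) ^ k * real (card (matchings n))"
    by (rule mult_right_mono[OF main_est[OF n1 kp(1) k2]]) simp
  also have "\<dots> \<le> (9/16) ^ k * real (card (matchings n))"
    by (rule mult_right_mono[OF power_mono[OF base]]) simp_all
  finally show ?thesis unfolding k_def .
qed

lemma root_bound:
  assumes "n \<le> a * b" "real b < 8 * sqrt (real n)" "1 \<le> n"
  shows "1/8 * sqrt (real n) \<le> real a"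
proof -
  define s where "s = sqrt (real n)"
  have s2: "s * s = real n" unfolding s_def by simp
  have spos: "0 < s" unfolding s_def using assms(3) by simp
  have "s * s \<le> real a * real b" using assms(1) s2 by (metis of_nat_le_iff of_nat_mult)
  also have "\<dots> \<le> real a * (8 * s)" using assms(2) unfolding s_def by (intro mult_left_mono) auto
  finally have "s * s \<le> (8 * real a) * s" by (simp add: ac_simps)
  then have "s \<le> 8 * real a" using spos by simp
  then show ?thesis unfolding s_def by simp
qed

lemma good_P1:
  assumes M: "M \<in> matchings n" and n: "1 \<le> n" and a: "z P1 M < kk n" "z PQ M < kk n"
  shows "1/8 * sqrt (real n) \<le> real (z P1 M) \<and> real (z P1 M) \<le> 8 * sqrt (real n)"
proof -
  have pM0: "pmat M \<and> \<Union>M = {1..2*n}" using M unfolding matchings_pm pm_def by simp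
  have "n \<le> z P1 M * z PQ M" using mirsky[OF conjunct1[OF pM0] matchings_fin[OF M]] card_M[OF M] by simp
  then have "1/8 * sqrt (real n) \<le> real (z P1 M)" using kk_less[OF a(2)] n by (rule root_bound)
  moreover have "real (z P1 M) \<le> 8 * sqrt (real n)" using kk_less[OF a(1)] by simp
  ultimately show ?thesis by simp
qed

lemma good_P2:
  assumes M: "M \<in> matchings n" and n: "1 \<le> n" and a: "z P2 M < kk n" "z P1 M < kk n"
  shows "1/8 * sqrt (real n) \<le> real (z P2 M) \<and> real (z P2 M) \<le> 8 * sqrt (real n)"
proof -
  have pM0: "pmat M \<and> \<Union>M = {1..2*n}" using M unfolding matchings_pm pm_def by simp
  have "n \<le> z PQ M * z P1 M" using mirsky[OF conjunct1[OF pM0] matchings_fin[OF M]] card_M[OF M]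
    by (simp add: mult.commute)
  then have "1/8 * sqrt (real n) \<le> real (z PQ M)" using kk_less[OF a(2)] n by (rule root_bound)
  also have "\<dots> \<le> real (z P2 M)" using z_mono[of PQ P2, OF _ matchings_fin[OF M]] by simp
  finally have "1/8 * sqrt (real n) \<le> real (z P2 M)" .
  moreover have "real (z P2 M) \<le> 8 * sqrt (real n)" using kk_less[OF a(1)] by simp
  ultimately show ?thesis by simp
qed

lemma prob_lower:
  assumes X: "X1 \<in> {P1,P2,PQ}" "X2 \<in> {P1,P2,PQ}" and n: "400 \<le> n"
    and G: "\<And>M. M \<in> matchings n \<Longrightarrow> z X1 M < kk n \<Longrightarrow> z X2 M < kk n \<Longrightarrow> M \<in> Gd"
  shows "1 - 2 * (9/16)^(kk n) \<le> measure_pmf.prob (RM n) Gd"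
proof -
  define S where "S = matchings n"
  define B1 where "B1 = {M \<in> matchings n. kk n \<le> z X1 M}"
  define B2 where "B2 = {M \<in> matchings n. kk n \<le> z X2 M}"
  have finS: "finite S" unfolding S_def matchings_pm by (rule pm_finite) simp
  have cS: "card S = g n" unfolding S_def by (rule card_matchings)
  then have cSpos: "0 < card S" using g_pos by simp
  then have neS: "S \<noteq> {}" by auto
  have prob: "measure_pmf.prob (RM n) Gd = real (card (S \<inter> Gd)) / real (card S)"
    unfolding RM_def S_def[symmetric] by (rule measure_pmf_of_set[OF neS finS])
  have sub: "S \<subseteq> ((S \<inter> Gd) \<union> B1) \<union> B2"
  proof
    fix M assume M: "M \<in> S"
    show "M \<in> ((S \<inter> Gd) \<union> B1) \<union> B2"
    proof (cases "kk n \<le> z X1 M \<or> kk n \<le> z X2 M")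
      case True then show ?thesis using M unfolding B1_def B2_def S_def by auto
    next
      case False
      then have "M \<in> Gd" using G M unfolding S_def by simp
      then show ?thesis using M by simp
    qed
  qed
  have "card S \<le> card (((S \<inter> Gd) \<union> B1) \<union> B2)"
    by (rule card_mono[OF _ sub]) (simp add: finS B1_def B2_def S_def[symmetric])
  also have "\<dots> \<le> card ((S \<inter> Gd) \<union> B1) + card B2" by (rule card_Un_le)
  also have "\<dots> \<le> card (S \<inter> Gd) + card B1 + card B2" using card_Un_le[of "S \<inter> Gd" B1] by simp
  finally have c: "real (card S) \<le> real (card (S \<inter> Gd)) + real (card B1) + real (card B2)"
    by (metis of_nat_add of_nat_le_iff)
  have b1: "real (card B1) \<le> (9/16)^(kk n) * real (card S)" unfolding B1_def S_def by (rule small[OF X(1) n])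
  have b2: "real (card B2) \<le> (9/16)^(kk n) * real (card S)" unfolding B2_def S_def by (rule small[OF X(2) n])
  have "(1 - 2 * (9/16)^(kk n)) * real (card S) \<le> real (card (S \<inter> Gd))"
    using c b1 b2 by (simp add: algebra_simps)
  then show ?thesis unfolding prob using cSpos by (simp add: le_divide_eq)
qed

lemma kk_lim: "filterlim kk at_top sequentially"
  unfolding filterlim_at_top
proof
  fix Z :: nat
  show "eventually (\<lambda>n. Z \<le> kk n) sequentially"
  proof (rule eventually_sequentiallyI[of "Z*Z"])
    fix n assume a: "Z * Z \<le> n"
    have "real Z ^ 2 \<le> real n" using a by (metis of_nat_le_iff of_nat_mult power2_eq_square)
    then have "real Z \<le> sqrt (real n)" by (rule real_le_rsqrt)
    also have "\<dots> \<le> 8 * sqrt (real n)" by simp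
    also have "\<dots> \<le> real (kk n)" by (rule kk_ge)
    finally show "Z \<le> kk n" by simp
  qed
qed

lemma q_lim: "(\<lambda>n. (9/16::real)^(kk n)) \<longlonglongrightarrow> 0"
proof -
  have "(\<lambda>j. (9/16::real)^j) \<longlonglongrightarrow> 0" by (rule LIMSEQ_realpow_zero) simp_all
  then show ?thesis using kk_lim by (rule filterlim_compose)
qed

lemma final_lim:
  assumes X: "X1 \<in> {P1,P2,PQ}" "X2 \<in> {P1,P2,PQ}"
    and G: "\<And>n M. 400 \<le> n \<Longrightarrow> M \<in> matchings n \<Longrightarrow> z X1 M < kk n \<Longrightarrow> z X2 M < kk n \<Longrightarrow> M \<in> Gd n"
  shows "(\<lambda>n. measure_pmf.prob (RM n) (Gd n)) \<longlonglongrightarrow> 1"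
proof (rule tendsto_sandwich[of "\<lambda>n. 1 - 2 * (9/16)^(kk n)" _ _ "\<lambda>n. 1"])
  show "eventually (\<lambda>n. 1 - 2 * (9/16)^(kk n) \<le> measure_pmf.prob (RM n) (Gd n)) sequentially"
    by (rule eventually_sequentiallyI[of 400]) (rule prob_lower[OF X], assumption, rule G)
  show "eventually (\<lambda>n. measure_pmf.prob (RM n) (Gd n) \<le> 1) sequentially" by simp
  have "(\<lambda>n. 1 - 2 * (9/16::real)^(kk n)) \<longlonglongrightarrow> 1 - 2 * 0"
    by (intro tendsto_intros q_lim)
  then show "(\<lambda>n. 1 - 2 * (9/16::real)^(kk n)) \<longlonglongrightarrow> 1" by simp
  show "(\<lambda>n. 1::real) \<longlonglongrightarrow> 1" by simp
qed

theorem theorem1p1: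
  shows "\<forall>P \<in> {{AABB, ABAB}, {AABB, ABBA}}. \<exists>c C :: real. 0 < c \<and> c < C \<and>
    (\<lambda>n. measure_pmf.prob (RM n)
        {M. c * sqrt (real n) \<le> real (z P M) \<and> real (z P M) \<le> C * sqrt (real n)})
      \<longlonglongrightarrow> 1"
proof
  fix P assume P: "P \<in> {{AABB, ABAB}, {AABB, ABBA}}"
  have lim: "(\<lambda>n. measure_pmf.prob (RM n)
        {M. 1/8 * sqrt (real n) \<le> real (z P M) \<and> real (z P M) \<le> 8 * sqrt (real n)}) \<longlonglongrightarrow> 1"
  proof (cases "P = P1")
    case True
    show ?thesis unfolding True
    proof (rule final_lim[of P1 PQ])
      fix n M assume h: "400 \<le> n" "M \<in> matchings n" "z P1 M < kk n" "z PQ M < kk n"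
      have "1 \<le> n" using h(1) by simp
      then show "M \<in> {M. 1/8 * sqrt (real n) \<le> real (z P1 M) \<and> real (z P1 M) \<le> 8 * sqrt (real n)}"
        using good_P1[OF h(2) _ h(3,4)] by simp
    qed simp_all
  next
    case False
    then have P2: "P = P2" using P by blast
    show ?thesis unfolding P2
    proof (rule final_lim[of P2 P1])
      fix n M assume h: "400 \<le> n" "M \<in> matchings n" "z P2 M < kk n" "z P1 M < kk n"
      have "1 \<le> n" using h(1) by simp
      then show "M \<in> {M. 1/8 * sqrt (real n) \<le> real (z P2 M) \<and> real (z P2 M) \<le> 8 * sqrt (real n)}"
        using good_P2[OF h(2) _ h(3,4)] by simp
    qed simp_all
  qed
  show "\<exists>c C :: real. 0 < c \<and> c < C \<and>
    (\<lambda>n. measure_pmf.prob (RM n)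
        {M. c * sqrt (real n) \<le> real (z P M) \<and> real (z P M) \<le> C * sqrt (real n)})
      \<longlonglongrightarrow> 1"
  proof -
    have "(0::real) < 1/8 \<and> 1/8 < (8::real) \<and> (\<lambda>n. measure_pmf.prob (RM n)
        {M. 1/8 * sqrt (real n) \<le> real (z P M) \<and> real (z P M) \<le> 8 * sqrt (real n)}) \<longlonglongrightarrow> 1"
      by (intro conjI lim) simp_all
    then show ?thesis by blast
  qed
qed

end
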